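(* Let $E$ be a contact Riemannian Lie algebroid with associated almost contact Riemannian structure $(F_E,\xi,\eta,g_E)$. Then $\mathcal{L}_\xi\eta=0$, $\mathcal{L}_\xi(d_E\eta)=0$, and $(\mathcal{L}_{F_E(s_1)}\eta)(s_2)=(\mathcal{L}_{F_E(s_2)}\eta)(s_1)$ for all $s_1,s_2\in\Gamma(E)$.
   Context: A Lie algebroid $(E,\rho_E,[\cdot,\cdot]_E)$ over $M$ is a vector bundle with anchor $\rho_E:E\to TM$ and Lie bracket on $\Gamma(E)$ with $[s_1,fs_2]_E=f[s_1,s_2]_E+\rho_E(s_1)(f)s_2$. For a 1-form $\eta$, $(d_E\eta)(s_1,s_2)=\frac12\{\rho_E(s_1)(\eta(s_2))-\rho_E(s_2)(\eta(s_1))-\eta([s_1,s_2]_E)\}$. For $E$ of rank $2m+1$, an almost contact Riemannian structure $(F_E,\xi,\eta,g_E)$: endomorphism $F_E$, $\xi\in\Gamma(E)$, $\eta\in\Gamma(E^* )$, bundle metric $g_E$ with $F_E^2=-I_E+\eta\otimes\xi$, $\eta(\xi)=1$, $g_E(F_Es_1,F_Es_2)=g_E(s_1,s_2)-\eta(s_1)\eta(s_2)$; fundamental form $\Omega_E(s_1,s_2)=g_E(s_1,F_Es_2)$. $E$ is contact Riemannian if also $\eta\wedge(d_E\eta)^m$ vanishes nowhere and $d_E\eta=\Omega_E$. Lie derivatives: $(\mathcal{L}_s\eta)(s')=\rho_E(s)(\eta(s'))-\eta([s,s']_E)$; for a 2-form $\omega$, $(\mathcal{L}_s\omega)(s_1,s_2)=\rho_E(s)(\omega(s_1,s_2))-\omega([s,s_1]_E,s_2)-\omega(s_1,[s,s_2]_E)$.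 *)

theory Defs
  imports "HOL-Analysis.Analysis"
begin

text \<open>Algebraic model of a vector bundle E over M and its Lie algebroid structure.
  Points of M: type 'm.  Smooth functions: a set C of real functions on 'm.
  Sections of E: a set Gam of maps 'm \<Rightarrow> 'v (E embedded in a trivial bundle with
  fibre the real vector space 'v); the fibre E_x is the set of values s x of sections.\<close>

definition smul :: "('m \<Rightarrow> real) \<Rightarrow> ('m \<Rightarrow> 'v::real_vector) \<Rightarrow> ('m \<Rightarrow> 'v)" where
  "smul f s = (\<lambda>x. f x *\<^sub>R s x)"

definition fun_algebra :: "('m \<Rightarrow> real) set \<Rightarrow> bool" where
  "fun_algebra C \<longleftrightarrow> (\<forall>c. (\<lambda>x. c) \<in> C) \<and>
     (\<forall>f\<in>C. \<forall>h\<in>C. (\<lambda>x. f x + h x) \<in> C \<and> (\<lambda>x. f x * h x) \<in> C)"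

definition section_module ::
  "('m \<Rightarrow> real) set \<Rightarrow> ('m \<Rightarrow> 'v::real_vector) set \<Rightarrow> nat \<Rightarrow> bool" where
  "section_module C Gam n \<longleftrightarrow> (\<lambda>x. 0) \<in> Gam \<and>
     (\<forall>s\<in>Gam. \<forall>t\<in>Gam. (\<lambda>x. s x + t x) \<in> Gam) \<and>
     (\<forall>f\<in>C. \<forall>s\<in>Gam. smul f s \<in> Gam) \<and>
     (\<forall>x. dim {s x | s. s \<in> Gam} = n)"

definition lie_algebroid ::
  "('m \<Rightarrow> real) set \<Rightarrow> ('m \<Rightarrow> 'v::real_vector) set \<Rightarrow> nat
   \<Rightarrow> (('m \<Rightarrow> 'v) \<Rightarrow> ('m \<Rightarrow> real) \<Rightarrow> ('m \<Rightarrow> real))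
   \<Rightarrow> (('m \<Rightarrow> 'v) \<Rightarrow> ('m \<Rightarrow> 'v) \<Rightarrow> ('m \<Rightarrow> 'v)) \<Rightarrow> bool" where
  "lie_algebroid C Gam n \<rho> br \<longleftrightarrow>
     fun_algebra C \<and> section_module C Gam n \<and>
     \<comment> \<open>anchor: a C-linear map from sections to vector fields (derivations of C)\<close>
     (\<forall>s\<in>Gam. \<forall>f\<in>C. \<rho> s f \<in> C) \<and>
     (\<forall>s\<in>Gam. \<forall>t\<in>Gam. \<forall>h\<in>C. \<rho> (\<lambda>x. s x + t x) h = (\<lambda>x. \<rho> s h x + \<rho> t h x)) \<and>
     (\<forall>f\<in>C. \<forall>s\<in>Gam. \<forall>h\<in>C. \<rho> (smul f s) h = (\<lambda>x. f x * \<rho> s h x)) \<and>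
     (\<forall>s\<in>Gam. \<forall>f\<in>C. \<forall>h\<in>C. \<rho> s (\<lambda>x. f x + h x) = (\<lambda>x. \<rho> s f x + \<rho> s h x)) \<and>
     (\<forall>s\<in>Gam. \<forall>c. \<forall>f\<in>C. \<rho> s (\<lambda>x. c * f x) = (\<lambda>x. c * \<rho> s f x)) \<and>
     (\<forall>s\<in>Gam. \<forall>f\<in>C. \<forall>h\<in>C.
        \<rho> s (\<lambda>x. f x * h x) = (\<lambda>x. f x * \<rho> s h x + h x * \<rho> s f x)) \<and>
     \<comment> \<open>bracket: a real Lie bracket on sections\<close>
     (\<forall>s\<in>Gam. \<forall>t\<in>Gam. br s t \<in> Gam) \<and>
     (\<forall>s\<in>Gam. \<forall>t\<in>Gam. \<forall>u\<in>Gam. br (\<lambda>x. s x + t x) u = (\<lambda>x. br s u x + br t u x)) \<and>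
     (\<forall>c. \<forall>s\<in>Gam. \<forall>t\<in>Gam. br (smul (\<lambda>x. c) s) t = smul (\<lambda>x. c) (br s t)) \<and>
     (\<forall>s\<in>Gam. \<forall>t\<in>Gam. br s t = (\<lambda>x. - br t s x)) \<and>
     (\<forall>s\<in>Gam. \<forall>t\<in>Gam. \<forall>u\<in>Gam.
        br s (br t u) = (\<lambda>x. br (br s t) u x + br t (br s u) x)) \<and>
     \<comment> \<open>Leibniz rule\<close>
     (\<forall>s\<in>Gam. \<forall>t\<in>Gam. \<forall>f\<in>C.
        br s (smul f t) = (\<lambda>x. f x *\<^sub>R br s t x + \<rho> s f x *\<^sub>R t x)) \<and>
     \<comment> \<open>anchor is a Lie algebra morphism (a consequence of the above for genuine bundles)\<close>
     (\<forall>s\<in>Gam. \<forall>t\<in>Gam. \<forall>f\<in>C. \<rho> (br s t) f = (\<lambda>x. \<rho> s (\<rho> t f) x - \<rho> t (\<rho> s f) x))"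

definition one_form ::
  "('m \<Rightarrow> real) set \<Rightarrow> ('m \<Rightarrow> 'v::real_vector) set \<Rightarrow> (('m \<Rightarrow> 'v) \<Rightarrow> ('m \<Rightarrow> real)) \<Rightarrow> bool" where
  "one_form C Gam \<eta> \<longleftrightarrow> (\<forall>s\<in>Gam. \<eta> s \<in> C) \<and>
     (\<forall>s\<in>Gam. \<forall>t\<in>Gam. \<eta> (\<lambda>x. s x + t x) = (\<lambda>x. \<eta> s x + \<eta> t x)) \<and>
     (\<forall>f\<in>C. \<forall>s\<in>Gam. \<eta> (smul f s) = (\<lambda>x. f x * \<eta> s x))"

definition d_E ::
  "(('m \<Rightarrow> 'v) \<Rightarrow> ('m \<Rightarrow> real) \<Rightarrow> ('m \<Rightarrow> real)) \<Rightarrow> (('m \<Rightarrow> 'v) \<Rightarrow> ('m \<Rightarrow> 'v) \<Rightarrow> ('m \<Rightarrow> 'v))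
   \<Rightarrow> (('m \<Rightarrow> 'v) \<Rightarrow> ('m \<Rightarrow> real)) \<Rightarrow> ('m \<Rightarrow> 'v) \<Rightarrow> ('m \<Rightarrow> 'v) \<Rightarrow> ('m \<Rightarrow> real)" where
  "d_E \<rho> br \<eta> s1 s2 = (\<lambda>x. (1/2) * (\<rho> s1 (\<eta> s2) x - \<rho> s2 (\<eta> s1) x - \<eta> (br s1 s2) x))"

definition lie_deriv_1 ::
  "(('m \<Rightarrow> 'v) \<Rightarrow> ('m \<Rightarrow> real) \<Rightarrow> ('m \<Rightarrow> real)) \<Rightarrow> (('m \<Rightarrow> 'v) \<Rightarrow> ('m \<Rightarrow> 'v) \<Rightarrow> ('m \<Rightarrow> 'v))
   \<Rightarrow> ('m \<Rightarrow> 'v) \<Rightarrow> (('m \<Rightarrow> 'v) \<Rightarrow> ('m \<Rightarrow> real)) \<Rightarrow> ('m \<Rightarrow> 'v) \<Rightarrow> ('m \<Rightarrow> real)" where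
  "lie_deriv_1 \<rho> br s \<eta> s' = (\<lambda>x. \<rho> s (\<eta> s') x - \<eta> (br s s') x)"

definition lie_deriv_2 ::
  "(('m \<Rightarrow> 'v) \<Rightarrow> ('m \<Rightarrow> real) \<Rightarrow> ('m \<Rightarrow> real)) \<Rightarrow> (('m \<Rightarrow> 'v) \<Rightarrow> ('m \<Rightarrow> 'v) \<Rightarrow> ('m \<Rightarrow> 'v))
   \<Rightarrow> ('m \<Rightarrow> 'v) \<Rightarrow> (('m \<Rightarrow> 'v) \<Rightarrow> ('m \<Rightarrow> 'v) \<Rightarrow> ('m \<Rightarrow> real))
   \<Rightarrow> ('m \<Rightarrow> 'v) \<Rightarrow> ('m \<Rightarrow> 'v) \<Rightarrow> ('m \<Rightarrow> real)" where
  "lie_deriv_2 \<rho> br s \<omega> s1 s2 =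
     (\<lambda>x. \<rho> s (\<omega> s1 s2) x - \<omega> (br s s1) s2 x - \<omega> s1 (br s s2) x)"

definition almost_contact_riemannian ::
  "('m \<Rightarrow> real) set \<Rightarrow> ('m \<Rightarrow> 'v::real_vector) set \<Rightarrow> nat
   \<Rightarrow> (('m \<Rightarrow> 'v) \<Rightarrow> ('m \<Rightarrow> 'v)) \<Rightarrow> ('m \<Rightarrow> 'v) \<Rightarrow> (('m \<Rightarrow> 'v) \<Rightarrow> ('m \<Rightarrow> real))
   \<Rightarrow> (('m \<Rightarrow> 'v) \<Rightarrow> ('m \<Rightarrow> 'v) \<Rightarrow> ('m \<Rightarrow> real)) \<Rightarrow> bool" where
  "almost_contact_riemannian C Gam m F \<xi> \<eta> g \<longleftrightarrow>
     (\<forall>x. dim {s x | s. s \<in> Gam} = 2*m+1) \<and>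
     \<comment> \<open>F is a bundle endomorphism (C-linear on sections)\<close>
     (\<forall>s\<in>Gam. F s \<in> Gam) \<and>
     (\<forall>s\<in>Gam. \<forall>t\<in>Gam. F (\<lambda>x. s x + t x) = (\<lambda>x. F s x + F t x)) \<and>
     (\<forall>f\<in>C. \<forall>s\<in>Gam. F (smul f s) = smul f (F s)) \<and>
     \<xi> \<in> Gam \<and> one_form C Gam \<eta> \<and>
     \<comment> \<open>g is a bundle metric: C-bilinear, symmetric, positive definite\<close>
     (\<forall>s\<in>Gam. \<forall>t\<in>Gam. g s t \<in> C \<and> g s t = g t s) \<and>
     (\<forall>s\<in>Gam. \<forall>t\<in>Gam. \<forall>u\<in>Gam. g (\<lambda>x. s x + t x) u = (\<lambda>x. g s u x + g t u x)) \<and>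
     (\<forall>f\<in>C. \<forall>s\<in>Gam. \<forall>t\<in>Gam. g (smul f s) t = (\<lambda>x. f x * g s t x)) \<and>
     (\<forall>s\<in>Gam. \<forall>x. 0 \<le> g s s x \<and> (s x \<noteq> 0 \<longrightarrow> 0 < g s s x)) \<and>
     \<comment> \<open>F^2 = -I + eta (x) xi,  eta(xi) = 1,  compatibility\<close>
     (\<forall>s\<in>Gam. F (F s) = (\<lambda>x. - s x + \<eta> s x *\<^sub>R \<xi> x)) \<and>
     \<eta> \<xi> = (\<lambda>x. 1) \<and>
     (\<forall>s\<in>Gam. \<forall>t\<in>Gam. g (F s) (F t) = (\<lambda>x. g s t x - \<eta> s x * \<eta> t x))"

definition fundamental_form ::
  "(('m \<Rightarrow> 'v) \<Rightarrow> ('m \<Rightarrow> 'v)) \<Rightarrow> (('m \<Rightarrow> 'v) \<Rightarrow> ('m \<Rightarrow> 'v) \<Rightarrow> ('m \<Rightarrow> real))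
   \<Rightarrow> ('m \<Rightarrow> 'v) \<Rightarrow> ('m \<Rightarrow> 'v) \<Rightarrow> ('m \<Rightarrow> real)" where
  "fundamental_form F g s1 s2 = g s1 (F s2)"

text \<open>Value of the (2m+1)-form eta \<and> (omega)^m on sections ss 0, ..., ss (2m),
  up to a nonzero normalising constant (irrelevant for non-vanishing).\<close>
definition wedge_eta_omega_pow ::
  "(('m \<Rightarrow> 'v) \<Rightarrow> ('m \<Rightarrow> real)) \<Rightarrow> (('m \<Rightarrow> 'v) \<Rightarrow> ('m \<Rightarrow> 'v) \<Rightarrow> ('m \<Rightarrow> real)) \<Rightarrow> nat
   \<Rightarrow> (nat \<Rightarrow> ('m \<Rightarrow> 'v)) \<Rightarrow> 'm \<Rightarrow> real" where
  "wedge_eta_omega_pow \<eta> \<omega> m ss x =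
     (\<Sum>\<sigma> \<in> {p. p permutes {0..2*m}}.
        of_int (sign \<sigma>) * \<eta> (ss (\<sigma> 0)) x *
        (\<Prod>i\<in>{1..m}. \<omega> (ss (\<sigma> (2*i - 1))) (ss (\<sigma> (2*i))) x))"

definition nowhere_vanishing_top ::
  "('m \<Rightarrow> 'v) set \<Rightarrow> (('m \<Rightarrow> 'v) \<Rightarrow> ('m \<Rightarrow> real)) \<Rightarrow> (('m \<Rightarrow> 'v) \<Rightarrow> ('m \<Rightarrow> 'v) \<Rightarrow> ('m \<Rightarrow> real))
   \<Rightarrow> nat \<Rightarrow> bool" where
  "nowhere_vanishing_top Gam \<eta> \<omega> m \<longleftrightarrow>
     (\<forall>x. \<exists>ss. (\<forall>i\<le>2*m. ss i \<in> Gam) \<and> wedge_eta_omega_pow \<eta> \<omega> m ss x \<noteq> 0)"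

definition contact_riemannian_lie_algebroid ::
  "('m \<Rightarrow> real) set \<Rightarrow> ('m \<Rightarrow> 'v::real_vector) set \<Rightarrow> nat
   \<Rightarrow> (('m \<Rightarrow> 'v) \<Rightarrow> ('m \<Rightarrow> real) \<Rightarrow> ('m \<Rightarrow> real)) \<Rightarrow> (('m \<Rightarrow> 'v) \<Rightarrow> ('m \<Rightarrow> 'v) \<Rightarrow> ('m \<Rightarrow> 'v))
   \<Rightarrow> (('m \<Rightarrow> 'v) \<Rightarrow> ('m \<Rightarrow> 'v)) \<Rightarrow> ('m \<Rightarrow> 'v) \<Rightarrow> (('m \<Rightarrow> 'v) \<Rightarrow> ('m \<Rightarrow> real))
   \<Rightarrow> (('m \<Rightarrow> 'v) \<Rightarrow> ('m \<Rightarrow> 'v) \<Rightarrow> ('m \<Rightarrow> real)) \<Rightarrow> bool" where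
  "contact_riemannian_lie_algebroid C Gam m \<rho> br F \<xi> \<eta> g \<longleftrightarrow>
     lie_algebroid C Gam (2*m+1) \<rho> br \<and>
     almost_contact_riemannian C Gam m F \<xi> \<eta> g \<and>
     nowhere_vanishing_top Gam \<eta> (d_E \<rho> br \<eta>) m \<and>
     (\<forall>s1\<in>Gam. \<forall>s2\<in>Gam. d_E \<rho> br \<eta> s1 s2 = fundamental_form F g s1 s2)"

end

theory Submission
  imports Defs
begin

theorem proposition4p3:
  fixes C :: "('m \<Rightarrow> real) set" and Gam :: "('m \<Rightarrow> 'v::real_vector) set" and m :: nat
    and \<rho> :: "('m \<Rightarrow> 'v) \<Rightarrow> ('m \<Rightarrow> real) \<Rightarrow> ('m \<Rightarrow> real)"
    and br :: "('m \<Rightarrow> 'v) \<Rightarrow> ('m \<Rightarrow> 'v) \<Rightarrow> ('m \<Rightarrow> 'v)"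
    and F :: "('m \<Rightarrow> 'v) \<Rightarrow> ('m \<Rightarrow> 'v)" and \<xi> :: "'m \<Rightarrow> 'v"
    and \<eta> :: "('m \<Rightarrow> 'v) \<Rightarrow> ('m \<Rightarrow> real)"
    and g :: "('m \<Rightarrow> 'v) \<Rightarrow> ('m \<Rightarrow> 'v) \<Rightarrow> ('m \<Rightarrow> real)"
  assumes "contact_riemannian_lie_algebroid C Gam m \<rho> br F \<xi> \<eta> g"
  shows "(\<forall>s\<in>Gam. lie_deriv_1 \<rho> br \<xi> \<eta> s = (\<lambda>x. 0))
    \<and> (\<forall>s1\<in>Gam. \<forall>s2\<in>Gam. lie_deriv_2 \<rho> br \<xi> (d_E \<rho> br \<eta>) s1 s2 = (\<lambda>x. 0))
    \<and> (\<forall>s1\<in>Gam. \<forall>s2\<in>Gam. lie_deriv_1 \<rho> br (F s1) \<eta> s2 = lie_deriv_1 \<rho> br (F s2) \<eta> s1)"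
proof -
  note A = assms[unfolded contact_riemannian_lie_algebroid_def lie_algebroid_def
      almost_contact_riemannian_def one_form_def fun_algebra_def section_module_def]
  have Cc0: "\<forall>c. (\<lambda>x. c) \<in> C" using A by (elim conjE) assumption
  have Cam: "\<forall>f\<in>C. \<forall>h\<in>C. (\<lambda>x. f x + h x) \<in> C \<and> (\<lambda>x. f x * h x) \<in> C" using A by (elim conjE) assumption
  have G00: "(\<lambda>x. 0) \<in> Gam" using A by (elim conjE) assumption
  have Gadd0: "\<forall>s\<in>Gam. \<forall>t\<in>Gam. (\<lambda>x. s x + t x) \<in> Gam" using A by (elim conjE) assumption
  have Gsmul0: "\<forall>f\<in>C. \<forall>s\<in>Gam. smul f s \<in> Gam" using A by (elim conjE) assumption
  have rhoC0: "\<forall>s\<in>Gam. \<forall>f\<in>C. \<rho> s f \<in> C" using A by (elim conjE) assumption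
  have rho_add0: "\<forall>s\<in>Gam. \<forall>f\<in>C. \<forall>h\<in>C. \<rho> s (\<lambda>x. f x + h x) = (\<lambda>x. \<rho> s f x + \<rho> s h x)" using A by (elim conjE) assumption
  have rho_cmul0: "\<forall>s\<in>Gam. \<forall>c. \<forall>f\<in>C. \<rho> s (\<lambda>x. c * f x) = (\<lambda>x. c * \<rho> s f x)" using A by (elim conjE) assumption
  have rho_mul0: "\<forall>s\<in>Gam. \<forall>f\<in>C. \<forall>h\<in>C.
        \<rho> s (\<lambda>x. f x * h x) = (\<lambda>x. f x * \<rho> s h x + h x * \<rho> s f x)" using A by (elim conjE) assumption
  have brG0: "\<forall>s\<in>Gam. \<forall>t\<in>Gam. br s t \<in> Gam" using A by (elim conjE) assumption
  have jac0: "\<forall>s\<in>Gam. \<forall>t\<in>Gam. \<forall>u\<in>Gam.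
        br s (br t u) = (\<lambda>x. br (br s t) u x + br t (br s u) x)" using A by (elim conjE) assumption
  have rho_br0: "\<forall>s\<in>Gam. \<forall>t\<in>Gam. \<forall>f\<in>C. \<rho> (br s t) f = (\<lambda>x. \<rho> s (\<rho> t f) x - \<rho> t (\<rho> s f) x)" using A by (elim conjE) assumption
  have FG0: "\<forall>s\<in>Gam. F s \<in> Gam" using A by (elim conjE) assumption
  have Fadd0: "\<forall>s\<in>Gam. \<forall>t\<in>Gam. F (\<lambda>x. s x + t x) = (\<lambda>x. F s x + F t x)" using A by (elim conjE) assumption
  have Fsmul0: "\<forall>f\<in>C. \<forall>s\<in>Gam. F (smul f s) = smul f (F s)" using A by (elim conjE) assumption
  have xiG: "\<xi> \<in> Gam" using A by (elim conjE) assumption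
  have etaC0: "\<forall>s\<in>Gam. \<eta> s \<in> C" using A by (elim conjE) assumption
  have eta_add0: "\<forall>s\<in>Gam. \<forall>t\<in>Gam. \<eta> (\<lambda>x. s x + t x) = (\<lambda>x. \<eta> s x + \<eta> t x)" using A by (elim conjE) assumption
  have eta_smul0: "\<forall>f\<in>C. \<forall>s\<in>Gam. \<eta> (smul f s) = (\<lambda>x. f x * \<eta> s x)" using A by (elim conjE) assumption
  have gsym0: "\<forall>s\<in>Gam. \<forall>t\<in>Gam. g s t \<in> C \<and> g s t = g t s" using A by (elim conjE) assumption
  have gadd0: "\<forall>s\<in>Gam. \<forall>t\<in>Gam. \<forall>u\<in>Gam. g (\<lambda>x. s x + t x) u = (\<lambda>x. g s u x + g t u x)" using A by (elim conjE) assumption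
  have FF0: "\<forall>s\<in>Gam. F (F s) = (\<lambda>x. - s x + \<eta> s x *\<^sub>R \<xi> x)" using A by (elim conjE) assumption
  have etaxi: "\<eta> \<xi> = (\<lambda>x. 1)" using A by (elim conjE) assumption
  have gF0: "\<forall>s\<in>Gam. \<forall>t\<in>Gam. g (F s) (F t) = (\<lambda>x. g s t x - \<eta> s x * \<eta> t x)" using A by (elim conjE) assumption
  have dE0: "\<forall>s1\<in>Gam. \<forall>s2\<in>Gam. d_E \<rho> br \<eta> s1 s2 = fundamental_form F g s1 s2" using A by (elim conjE) assumption
  have Cc: "\<And>c. (\<lambda>x. c) \<in> C" using Cc0 by blast
  have Cadd: "\<And>f h. f \<in> C \<Longrightarrow> h \<in> C \<Longrightarrow> (\<lambda>x. f x + h x) \<in> C" using Cam by blast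
  have Cmul: "\<And>f h. f \<in> C \<Longrightarrow> h \<in> C \<Longrightarrow> (\<lambda>x. f x * h x) \<in> C" using Cam by blast
  have Cneg: "\<And>h. h \<in> C \<Longrightarrow> (\<lambda>x. - h x) \<in> C"
    using Cmul[OF Cc[of "-1"]] by simp
  have Cdiff: "\<And>f h. f \<in> C \<Longrightarrow> h \<in> C \<Longrightarrow> (\<lambda>x. f x - h x) \<in> C"
    using Cadd[OF _ Cneg] by simp
  note G0 = G00 and Gsmul = Gsmul0[rule_format] and rhoC = rhoC0[rule_format]
    and rho_add = rho_add0[rule_format] and rho_cmul = rho_cmul0[rule_format]
    and rho_mul = rho_mul0[rule_format] and brG = brG0[rule_format] and jac = jac0[rule_format]
    and rho_br = rho_br0[rule_format] and FG = FG0[rule_format] and Fadd = Fadd0[rule_format]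
    and Fsmul = Fsmul0[rule_format] and etaC = etaC0[rule_format] and eta_add = eta_add0[rule_format]
    and eta_smul = eta_smul0[rule_format] and gadd = gadd0[rule_format] and FF = FF0[rule_format]
    and gF = gF0[rule_format]
  have gsym: "\<And>s t. s \<in> Gam \<Longrightarrow> t \<in> Gam \<Longrightarrow> g s t = g t s" using gsym0 by blast
  have dE: "\<And>s t. s \<in> Gam \<Longrightarrow> t \<in> Gam \<Longrightarrow> d_E \<rho> br \<eta> s t = g s (F t)"
    using dE0 unfolding fundamental_form_def by blast

  have rho1: "\<rho> s (\<lambda>x. 1) = (\<lambda>x. 0)" if "s \<in> Gam" for s
  proof -
    have "\<rho> s (\<lambda>x. (1::real) * 1) = (\<lambda>x. 1 * \<rho> s (\<lambda>x. 1) x + 1 * \<rho> s (\<lambda>x. 1) x)"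
      using rho_mul[OF that Cc[of 1] Cc[of 1]] by simp
    note E = this
    show ?thesis using fun_cong[OF E] by (auto simp: fun_eq_iff)
  qed
  have rho0: "\<rho> s (\<lambda>x. 0) = (\<lambda>x. 0)" if "s \<in> Gam" for s
    using rho_cmul[OF that Cc[of 1], of 0] by simp
  have rho_diff: "\<rho> s (\<lambda>x. f x - h x) = (\<lambda>x. \<rho> s f x - \<rho> s h x)"
    if "s \<in> Gam" "f \<in> C" "h \<in> C" for s f h
  proof -
    have "\<rho> s (\<lambda>x. f x + (-1) * h x) = (\<lambda>x. \<rho> s f x + \<rho> s (\<lambda>x. (-1) * h x) x)"
      using rho_add[OF that(1,2) Cmul[OF Cc[of "-1"] that(3)]] by simp
    then show ?thesis using rho_cmul[OF that(1,3), of "-1"] by simp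
  qed
  have rho_key: "\<rho> s (\<lambda>x. (1/2) * (f x - h x - k x)) = (\<lambda>x. (1/2) * (\<rho> s f x - \<rho> s h x - \<rho> s k x))"
    if "s \<in> Gam" "f \<in> C" "h \<in> C" "k \<in> C" for s f h k
  proof -
    have c1: "(\<lambda>x. f x - h x) \<in> C" using Cdiff that by blast
    have c2: "(\<lambda>x. f x - h x - k x) \<in> C" using Cdiff[OF c1 that(4)] by simp
    have "\<rho> s (\<lambda>x. f x - h x - k x) = (\<lambda>x. \<rho> s f x - \<rho> s h x - \<rho> s k x)"
      using rho_diff[OF that(1) c1 that(4)] rho_diff[OF that(1-3)] by simp
    then show ?thesis using rho_cmul[OF that(1) c2, of "1/2"] by simp
  qed
  have F0: "F (\<lambda>x. 0) = (\<lambda>x. 0)"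
  proof -
    have "F (\<lambda>x. 0 + 0) = (\<lambda>x. F (\<lambda>x. 0) x + F (\<lambda>x. 0) x)" using Fadd[OF G0 G0] by simp
    note E = this
    show ?thesis using fun_cong[OF E] by (auto simp: fun_eq_iff)
  qed
  have eta0: "\<eta> (\<lambda>x. 0) = (\<lambda>x. 0)"
  proof -
    have "\<eta> (\<lambda>x. 0 + 0) = (\<lambda>x. \<eta> (\<lambda>x. 0) x + \<eta> (\<lambda>x. 0) x)" using eta_add[OF G0 G0] by simp
    note E = this
    show ?thesis using fun_cong[OF E] by (auto simp: fun_eq_iff)
  qed
  have g0: "g (\<lambda>x. 0) t = (\<lambda>x. 0)" if "t \<in> Gam" for t
  proof -
    have "g (\<lambda>x. 0 + 0) t = (\<lambda>x. g (\<lambda>x. 0) t x + g (\<lambda>x. 0) t x)" using gadd[OF G0 G0 that] by simp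
    note E = this
    show ?thesis using fun_cong[OF E] by (auto simp: fun_eq_iff)
  qed
  have killxi: "f = (\<lambda>x. 0)" if "f \<in> C" "smul f \<xi> = (\<lambda>x. 0)" for f
    using eta_smul[OF that(1) xiG] that(2) eta0 etaxi by (simp add: fun_eq_iff)
  have FFxi: "F (F \<xi>) = (\<lambda>x. 0)" using FF[OF xiG] etaxi by simp
  define a where "a = \<eta> (F \<xi>)"
  have aC: "a \<in> C" using a_def etaC FG xiG by blast
  have Fxi_eq: "F \<xi> = smul a \<xi>"
  proof -
    have "F (F (F \<xi>)) = (\<lambda>x. - F \<xi> x + a x *\<^sub>R \<xi> x)" using FF[OF FG[OF xiG]] a_def by simp
    then show ?thesis using FFxi F0 by (auto simp: fun_eq_iff smul_def)
  qed
  have "F (F \<xi>) = smul a (smul a \<xi>)" using Fsmul[OF aC xiG] Fxi_eq by simp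
  then have "smul (\<lambda>x. a x * a x) \<xi> = (\<lambda>x. 0)" using FFxi by (simp add: smul_def fun_eq_iff)
  then have "(\<lambda>x. a x * a x) = (\<lambda>x. 0)" using killxi Cmul[OF aC aC] by blast
  then have "a = (\<lambda>x. 0)" by (simp add: fun_eq_iff)
  then have Fxi: "F \<xi> = (\<lambda>x. 0)" using Fxi_eq by (simp add: smul_def)
  have etaF: "\<eta> (F s) = (\<lambda>x. 0)" if "s \<in> Gam" for s
  proof -
    have e1: "(\<lambda>x. - s x + \<eta> s x *\<^sub>R \<xi> x) = (\<lambda>x. smul (\<lambda>x. -1) s x + smul (\<eta> s) \<xi> x)"
      by (simp add: smul_def)
    have "F (F (F s)) = F (\<lambda>x. smul (\<lambda>x. -1) s x + smul (\<eta> s) \<xi> x)" using FF[OF that] e1 by simp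
    also have "\<dots> = (\<lambda>x. smul (\<lambda>x. -1) (F s) x + smul (\<eta> s) (F \<xi>) x)"
      using Fadd[OF Gsmul[OF Cc[of "-1"] that] Gsmul[OF etaC[OF that] xiG]] Fsmul[OF Cc[of "-1"] that]
        Fsmul[OF etaC[OF that] xiG] by simp
    finally have "F (F (F s)) = (\<lambda>x. - F s x)" using Fxi by (simp add: smul_def)
    moreover have "F (F (F s)) = (\<lambda>x. - F s x + \<eta> (F s) x *\<^sub>R \<xi> x)" using FF[OF FG[OF that]] .
    ultimately have "smul (\<eta> (F s)) \<xi> = (\<lambda>x. 0)" by (simp add: smul_def fun_eq_iff)
    then show ?thesis using killxi etaC FG that by blast
  qed
  have gxi: "g \<xi> s = \<eta> s" if "s \<in> Gam" for s
    using gF[OF xiG that] Fxi g0[OF FG[OF that]] etaxi by (simp add: fun_eq_iff)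
  have dxi: "d_E \<rho> br \<eta> \<xi> s = (\<lambda>x. 0)" if "s \<in> Gam" for s
    using dE[OF xiG that] gxi[OF FG[OF that]] etaF[OF that] by simp
  have P1: "\<eta> (br \<xi> s) = \<rho> \<xi> (\<eta> s)" if "s \<in> Gam" for s
    using dxi[OF that] rho1[OF that] etaxi unfolding d_E_def by (simp add: fun_eq_iff)
  have part1: "\<forall>s\<in>Gam. lie_deriv_1 \<rho> br \<xi> \<eta> s = (\<lambda>x. 0)"
    using P1 unfolding lie_deriv_1_def by simp
  have part3: "\<forall>s1\<in>Gam. \<forall>s2\<in>Gam. lie_deriv_1 \<rho> br (F s1) \<eta> s2 = lie_deriv_1 \<rho> br (F s2) \<eta> s1"
  proof (intro ballI)
    fix s1 s2 assume s: "s1 \<in> Gam" "s2 \<in> Gam"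
    have L: "lie_deriv_1 \<rho> br (F t) \<eta> u = (\<lambda>x. 2 * g (F t) (F u) x)" if "t \<in> Gam" "u \<in> Gam" for t u
    proof -
      have "d_E \<rho> br \<eta> (F t) u = g (F t) (F u)" using dE[OF FG[OF that(1)] that(2)] .
      then show ?thesis using etaF[OF that(1)] rho0[OF that(2)]
        unfolding d_E_def lie_deriv_1_def by (simp add: fun_eq_iff)
    qed
    show "lie_deriv_1 \<rho> br (F s1) \<eta> s2 = lie_deriv_1 \<rho> br (F s2) \<eta> s1"
      using L[OF s] L[OF s(2,1)] gsym[OF FG[OF s(1)] FG[OF s(2)]] by simp
  qed
  have part2: "\<forall>s1\<in>Gam. \<forall>s2\<in>Gam. lie_deriv_2 \<rho> br \<xi> (d_E \<rho> br \<eta>) s1 s2 = (\<lambda>x. 0)"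
  proof (intro ballI)
    fix s1 s2 assume s: "s1 \<in> Gam" "s2 \<in> Gam"
    have b1: "br \<xi> s1 \<in> Gam" and b2: "br \<xi> s2 \<in> Gam" and b12: "br s1 s2 \<in> Gam"
      using brG xiG s by auto
    have e1: "\<rho> \<xi> (d_E \<rho> br \<eta> s1 s2) = (\<lambda>x. (1/2) * (\<rho> \<xi> (\<rho> s1 (\<eta> s2)) x
        - \<rho> \<xi> (\<rho> s2 (\<eta> s1)) x - \<rho> \<xi> (\<eta> (br s1 s2)) x))"
      unfolding d_E_def using rho_key[OF xiG rhoC[OF s(1) etaC[OF s(2)]] rhoC[OF s(2) etaC[OF s(1)]] etaC[OF b12]] .
    have e2: "\<rho> \<xi> (\<eta> (br s1 s2)) = (\<lambda>x. \<eta> (br (br \<xi> s1) s2) x + \<eta> (br s1 (br \<xi> s2)) x)"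
      using P1[OF b12] jac[OF xiG s] eta_add[OF brG[OF b1 s(2)] brG[OF s(1) b2]] by simp
    have e3: "\<rho> (br \<xi> s1) (\<eta> s2) = (\<lambda>x. \<rho> \<xi> (\<rho> s1 (\<eta> s2)) x - \<rho> s1 (\<rho> \<xi> (\<eta> s2)) x)"
      using rho_br[OF xiG s(1) etaC[OF s(2)]] .
    have e4: "\<rho> (br \<xi> s2) (\<eta> s1) = (\<lambda>x. \<rho> \<xi> (\<rho> s2 (\<eta> s1)) x - \<rho> s2 (\<rho> \<xi> (\<eta> s1)) x)"
      using rho_br[OF xiG s(2) etaC[OF s(1)]] .
    show "lie_deriv_2 \<rho> br \<xi> (d_E \<rho> br \<eta>) s1 s2 = (\<lambda>x. 0)"
      unfolding lie_deriv_2_def fun_eq_iff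
      using e1 e2 e3 e4 P1[OF s(1)] P1[OF s(2)] unfolding d_E_def
      by (simp add: algebra_simps)
  qed
  show ?thesis using part1 part2 part3 by blast
qed

end
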